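(* Let $p,r$ be positive integers, $s=p+2r$, and write elements of $\mathbb{R}^{(p+s)\times p}$ as $X=(X_0;X_1;X_2;X_3)$ with blocks $X_0,X_1\in\mathbb{R}^{p\times p}$, $X_2,X_3\in\mathbb{R}^{r\times p}$; set $A=X_0-X_1$, $B=X_0+X_1$, $W=X_2+iX_3$. Let $\hat M$ be an element of the complexification $\mathfrak{so}(p,r)^{\mathbb{C}}$ and define $\hat\Phi:\mathbb{R}^{(p+s)\times p}\to\mathbb{C}^{(p+r)\times p}$ by $\hat\Phi(X)=\binom{A}{W}+\hat M\binom{B}{\bar W}$. Then the complex valued components of $\hat\Phi$ constitute an orthogonal harmonic family on $\mathbb{R}^{(p+s)\times p}$ equipped with the semi-Euclidean metric.
   Context: The semi-Euclidean metric on $\mathbb{R}^{(p+s)\times p}$ is $(X,Y)=\mathrm{trace}(X^tI_{ps}Y)$ with $I_{ps}=\mathrm{diag}(-I_p,I_s)$, i.e. the first $p$ rows (the block $X_0$) are negative. $\mathfrak{so}(p,r)^{\mathbb{C}}=\{M\in\mathbb{C}^{(p+r)\times(p+r)}: M^tI_{pr}+I_{pr}M=0\}$ with $I_{pr}=\mathrm{diag}(-I_p,I_r)$. For a semi-Riemannian manifold $(M,g)$ and complex functions $\phi,\psi$, $\tau(\phi)$ is the Laplace–Beltrami operator (extended complex-linearly) and $\kappa(\phi,\psi)=g(\mathrm{grad}\,\phi,\mathrm{grad}\,\psi)$ with $g$ extended complex-bilinearly. A set $\Omega$ of complex functions is an orthogonal harmonic family if $\tau(\phi)=0$ and $\kappa(\phi,\psi)=0$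 for all $\phi,\psi\in\Omega$. *)

theory Defs
  imports "HOL-Analysis.Analysis"
begin

text \<open>A point of R^{N x n} is represented as X :: nat => nat => real, X a j being the
entry in row a < N and column j < n (entries outside this range are irrelevant).\<close>

type_synonym rmat = "nat \<Rightarrow> nat \<Rightarrow> real"
type_synonym cmat = "nat \<Rightarrow> nat \<Rightarrow> complex"

definition sgn_pq :: "nat \<Rightarrow> nat \<Rightarrow> real" where
  "sgn_pq p a = (if a < p then -1 else 1)"

definition upd_entry :: "rmat \<Rightarrow> nat \<Rightarrow> nat \<Rightarrow> real \<Rightarrow> rmat" where
  "upd_entry X a j t = X(a := (X a)(j := t))"

definition partial :: "nat \<Rightarrow> nat \<Rightarrow> (rmat \<Rightarrow> complex) \<Rightarrow> rmat \<Rightarrow> complex" where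
  "partial a j f X = vector_derivative (\<lambda>t::real. f (upd_entry X a j t)) (at (X a j))"

text \<open>Laplace-Beltrami operator of the flat semi-Euclidean metric
 (X,Y) = trace(X^t I_{p,N-p} Y) on R^{N x n} (constant coefficients, g^{-1} = g).\<close>
definition tension :: "nat \<Rightarrow> nat \<Rightarrow> nat \<Rightarrow> (rmat \<Rightarrow> complex) \<Rightarrow> rmat \<Rightarrow> complex" where
  "tension p N n f X =
     (\<Sum>a<N. \<Sum>j<n. of_real (sgn_pq p a) * partial a j (partial a j f) X)"

definition conformality :: "nat \<Rightarrow> nat \<Rightarrow> nat \<Rightarrow> (rmat \<Rightarrow> complex) \<Rightarrow> (rmat \<Rightarrow> complex) \<Rightarrow> rmat \<Rightarrow> complex" where
  "conformality p N n f g X =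
     (\<Sum>a<N. \<Sum>j<n. of_real (sgn_pq p a) * partial a j f X * partial a j g X)"

definition orthogonal_harmonic_family ::
  "nat \<Rightarrow> nat \<Rightarrow> nat \<Rightarrow> (rmat \<Rightarrow> complex) set \<Rightarrow> bool" where
  "orthogonal_harmonic_family p N n \<Omega> \<longleftrightarrow>
     (\<forall>f\<in>\<Omega>. \<forall>X. tension p N n f X = 0) \<and>
     (\<forall>f\<in>\<Omega>. \<forall>g\<in>\<Omega>. \<forall>X. conformality p N n f g X = 0)"

definition in_so_C :: "nat \<Rightarrow> nat \<Rightarrow> cmat \<Rightarrow> bool" where
  "in_so_C p r M \<longleftrightarrow>
     (\<forall>i<p+r. \<forall>j<p+r. M j i * of_real (sgn_pq p j) + of_real (sgn_pq p i) * M i j = 0)"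

text \<open>Blocks X_0 (rows 0..p-1), X_1 (rows p..2p-1), X_2 (rows 2p..2p+r-1),
 X_3 (rows 2p+r..2p+2r-1).\<close>
definition blkA :: "nat \<Rightarrow> rmat \<Rightarrow> nat \<Rightarrow> nat \<Rightarrow> complex" where
  "blkA p X i j = of_real (X i j - X (p+i) j)"
definition blkB :: "nat \<Rightarrow> rmat \<Rightarrow> nat \<Rightarrow> nat \<Rightarrow> complex" where
  "blkB p X i j = of_real (X i j + X (p+i) j)"
definition blkW :: "nat \<Rightarrow> nat \<Rightarrow> rmat \<Rightarrow> nat \<Rightarrow> nat \<Rightarrow> complex" where
  "blkW p r X i j = Complex (X (2*p+i) j) (X (2*p+r+i) j)"

definition Phi_hat :: "nat \<Rightarrow> nat \<Rightarrow> cmat \<Rightarrow> rmat \<Rightarrow> nat \<Rightarrow> nat \<Rightarrow> complex" where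
  "Phi_hat p r M X k j =
     (if k < p then blkA p X k j else blkW p r X (k-p) j)
     + (\<Sum>l<p+r. M k l * (if l < p then blkB p X l j else cnj (blkW p r X (l-p) j)))"

end

theory Submission
  imports Defs
begin

definition Emat :: "nat \<Rightarrow> nat \<Rightarrow> rmat" where
  "Emat a j = (\<lambda>b c. if b = a \<and> c = j then 1 else 0)"

lemma Phi_lin:
  "Phi_hat p r M (\<lambda>b c. X b c + s * Y b c) k j
   = Phi_hat p r M X k j + of_real s * Phi_hat p r M Y k j"
proof -
  have W: "blkW p r (\<lambda>b c. X b c + s * Y b c) i j = blkW p r X i j + of_real s * blkW p r Y i j" for i
    by (simp add: blkW_def complex_eq_iff)
  have A: "blkA p (\<lambda>b c. X b c + s * Y b c) i j = blkA p X i j + of_real s * blkA p Y i j" for i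
    by (simp add: blkA_def algebra_simps)
  have B: "blkB p (\<lambda>b c. X b c + s * Y b c) i j = blkB p X i j + of_real s * blkB p Y i j" for i
    by (simp add: blkB_def algebra_simps)
  have S: "(\<Sum>l<p+r. M k l * (if l < p then blkB p X l j + of_real s * blkB p Y l j
          else cnj (blkW p r X (l - p) j + of_real s * blkW p r Y (l - p) j)))
     = (\<Sum>l<p+r. M k l * (if l < p then blkB p X l j else cnj (blkW p r X (l - p) j)))
       + of_real s * (\<Sum>l<p+r. M k l * (if l < p then blkB p Y l j else cnj (blkW p r Y (l - p) j)))"
    unfolding sum_distrib_left sum.distrib[symmetric]
    by (rule sum.cong) (auto simp: algebra_simps)
  show ?thesis
    unfolding Phi_hat_def W A B S
    by (simp add: algebra_simps)
qed

lemma upd_eq: "upd_entry X a j t = (\<lambda>b c. X b c + (t - X a j) * Emat a j b c)"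
  by (auto simp: upd_entry_def Emat_def fun_eq_iff)

lemma partial_Phi:
  "partial a j (\<lambda>X. Phi_hat p r M X k j') X = Phi_hat p r M (Emat a j) k j'"
proof -
  let ?D = "Phi_hat p r M (Emat a j) k j'"
  have e: "(\<lambda>t. Phi_hat p r M (upd_entry X a j t) k j')
      = (\<lambda>t. Phi_hat p r M X k j' + of_real (t - X a j) * ?D)"
    unfolding upd_eq Phi_lin by simp
  have "((\<lambda>t. Phi_hat p r M X k j' + of_real (t - X a j) * ?D) has_vector_derivative ?D) (at (X a j))"
    unfolding has_vector_derivative_def
    by (rule derivative_eq_intros | simp)+ (auto simp: scaleR_conv_of_real)
  then show ?thesis unfolding partial_def e by (rule vector_derivative_at)
qed

lemma partial_const: "partial a j (\<lambda>X. c) X = 0"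
  unfolding partial_def by (rule vector_derivative_at) (rule has_vector_derivative_const)

lemma partial_Phi_fun:
  "partial a j (\<lambda>X. Phi_hat p r M X k j') = (\<lambda>X. Phi_hat p r M (Emat a j) k j')"
  by (rule ext, rule partial_Phi)

lemma Phi_E_col: "j1 \<noteq> j \<Longrightarrow> Phi_hat p r M (Emat a j) k j1 = 0"
  unfolding Phi_hat_def
  by (subst sum.neutral) (auto simp: Emat_def blkA_def blkB_def blkW_def complex_eq_iff)

lemma delta_sum: "i < (n::nat) \<Longrightarrow> (\<Sum>l<n. M k l * (if l = i then 1 else 0)) = (M k i :: complex)"
proof -
  assume "i < n"
  have "(\<Sum>l<n. M k l * (if l = i then 1 else 0)) = (\<Sum>l<n. if l = i then M k i else 0)"
    by (rule sum.cong) auto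
  also have "\<dots> = M k i" using \<open>i < n\<close> by (simp add: sum.delta)
  finally show ?thesis .
qed

lemma L0: assumes "i < p"
  shows "Phi_hat p r M (Emat i jj) k jj = (if k = i then 1 else 0) + M k i"
proof -
  have "(\<Sum>l<p+r. M k l * (if l < p then blkB p (Emat i jj) l jj else cnj (blkW p r (Emat i jj) (l - p) jj)))
     = (\<Sum>l<p+r. M k l * (if l = i then 1 else 0))"
    using assms by (intro sum.cong) (auto simp: Emat_def blkB_def blkW_def complex_eq_iff)
  also have "\<dots> = M k i" using assms by (intro delta_sum) simp
  finally have S: "(\<Sum>l<p+r. M k l * (if l < p then blkB p (Emat i jj) l jj else cnj (blkW p r (Emat i jj) (l - p) jj))) = M k i" .
  have H: "(if k < p then blkA p (Emat i jj) k jj else blkW p r (Emat i jj) (k-p) jj) = (if k = i then 1 else 0)"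
    using assms by (auto simp: Emat_def blkA_def blkW_def complex_eq_iff)
  show ?thesis by (simp only: Phi_hat_def S H)
qed

lemma L1: assumes "i < p"
  shows "Phi_hat p r M (Emat (p+i) jj) k jj = - (if k = i then 1 else 0) + M k i"
proof -
  have "(\<Sum>l<p+r. M k l * (if l < p then blkB p (Emat (p+i) jj) l jj else cnj (blkW p r (Emat (p+i) jj) (l - p) jj)))
     = (\<Sum>l<p+r. M k l * (if l = i then 1 else 0))"
    using assms by (intro sum.cong) (auto simp: Emat_def blkB_def blkW_def complex_eq_iff)
  also have "\<dots> = M k i" using assms by (intro delta_sum) simp
  finally have S: "(\<Sum>l<p+r. M k l * (if l < p then blkB p (Emat (p+i) jj) l jj else cnj (blkW p r (Emat (p+i) jj) (l - p) jj))) = M k i" .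
  have H: "(if k < p then blkA p (Emat (p+i) jj) k jj else blkW p r (Emat (p+i) jj) (k-p) jj) = - (if k = i then 1 else 0)"
    using assms by (auto simp: Emat_def blkA_def blkW_def complex_eq_iff)
  show ?thesis by (simp only: Phi_hat_def S H)
qed

lemma L2: assumes "i < r"
  shows "Phi_hat p r M (Emat (2*p+i) jj) k jj = (if k = p+i then 1 else 0) + M k (p+i)"
proof -
  have "(\<Sum>l<p+r. M k l * (if l < p then blkB p (Emat (2*p+i) jj) l jj else cnj (blkW p r (Emat (2*p+i) jj) (l - p) jj)))
     = (\<Sum>l<p+r. M k l * (if l = p+i then 1 else 0))"
    using assms by (intro sum.cong) (auto simp: Emat_def blkB_def blkW_def complex_eq_iff)
  also have "\<dots> = M k (p+i)" using assms by (intro delta_sum) simp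
  finally have S: "(\<Sum>l<p+r. M k l * (if l < p then blkB p (Emat (2*p+i) jj) l jj else cnj (blkW p r (Emat (2*p+i) jj) (l - p) jj))) = M k (p+i)" .
  have H: "(if k < p then blkA p (Emat (2*p+i) jj) k jj else blkW p r (Emat (2*p+i) jj) (k-p) jj) = (if k = p+i then 1 else 0)"
    using assms by (auto simp: Emat_def blkA_def blkW_def complex_eq_iff)
  show ?thesis by (simp only: Phi_hat_def S H)
qed

lemma L3: assumes "i < r" and "k < p + r"
  shows "Phi_hat p r M (Emat (2*p+r+i) jj) k jj = \<i> * (if k = p+i then 1 else 0) + - \<i> * M k (p+i)"
proof -
  have "(\<Sum>l<p+r. M k l * (if l < p then blkB p (Emat (2*p+r+i) jj) l jj else cnj (blkW p r (Emat (2*p+r+i) jj) (l - p) jj)))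
     = (\<Sum>l<p+r. - \<i> * (M k l * (if l = p+i then 1 else 0)))"
    using assms by (intro sum.cong) (auto simp: Emat_def blkB_def blkW_def complex_eq_iff)
  also have "\<dots> = - \<i> * (\<Sum>l<p+r. M k l * (if l = p+i then 1 else 0))"
    by (simp only: sum_distrib_left)
  also have "\<dots> = - \<i> * M k (p+i)" using assms by (subst delta_sum) simp_all
  finally have S: "(\<Sum>l<p+r. M k l * (if l < p then blkB p (Emat (2*p+r+i) jj) l jj else cnj (blkW p r (Emat (2*p+r+i) jj) (l - p) jj))) = - \<i> * M k (p+i)" .
  have H: "(if k < p then blkA p (Emat (2*p+r+i) jj) k jj else blkW p r (Emat (2*p+r+i) jj) (k-p) jj) = \<i> * (if k = p+i then 1 else 0)"
    using assms by (auto simp: Emat_def blkA_def blkW_def complex_eq_iff)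
  show ?thesis by (simp only: Phi_hat_def S H)
qed

lemma sum_split_add: "(\<Sum>a<m+n. f a) = (\<Sum>a<m. f a) + (\<Sum>i<n. f (m+i::nat))"
  by (induction n) (auto simp: add_ac)


lemma dsum0: "(\<Sum>i<(p::nat). (if k = i then (1::complex) else 0) * g i) = (if k < p then g k else 0)"
proof -
  have "(\<Sum>i<p. (if k = i then (1::complex) else 0) * g i) = (\<Sum>i<p. if k = i then g k else 0)"
    by (rule sum.cong) auto
  then show ?thesis by simp
qed

lemma dsum1: "(\<Sum>i<(r::nat). (if k = p+i then (1::complex) else 0) * g (p+i)) = (if p \<le> k \<and> k < p+r then g k else 0)"
proof (cases "p \<le> k")
  case True
  have "(\<Sum>i<r. (if k = p+i then (1::complex) else 0) * g (p+i)) = (\<Sum>i<r. if k - p = i then g k else 0)"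
    using True by (intro sum.cong) auto
  then show ?thesis using True by auto
next
  case False
  then show ?thesis by (intro trans[OF sum.neutral]) auto
qed

lemma conf_core:
  assumes k: "k < p + r" and k': "k' < p + r" and so: "in_so_C p r M"
  shows "(\<Sum>a<p+p+r+r. of_real (sgn_pq p a) * Phi_hat p r M (Emat a jj) k jj * Phi_hat p r M (Emat a jj) k' jj) = 0"
proof -
  define F where "F a = of_real (sgn_pq p a) * Phi_hat p r M (Emat a jj) k jj * Phi_hat p r M (Emat a jj) k' jj" for a
  let ?d = "\<lambda>k i. (if k = i then (1::complex) else 0)"
  have s0: "(\<Sum>a<p. F a) = (\<Sum>i<p. - ((?d k i + M k i) * (?d k' i + M k' i)))"
    by (intro sum.cong) (auto simp: F_def L0 sgn_pq_def algebra_simps)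
  have s1: "(\<Sum>i<p. F (p+i)) = (\<Sum>i<p. (- ?d k i + M k i) * (- ?d k' i + M k' i))"
    by (intro sum.cong) (auto simp: F_def L1 sgn_pq_def)
  have s2: "(\<Sum>i<r. F (p+p+i)) = (\<Sum>i<r. (?d k (p+i) + M k (p+i)) * (?d k' (p+i) + M k' (p+i)))"
  proof (intro sum.cong refl)
    fix i assume "i \<in> {..<r}"
    then show "F (p+p+i) = (?d k (p+i) + M k (p+i)) * (?d k' (p+i) + M k' (p+i))"
      using L2[of i r p M jj k] L2[of i r p M jj k'] by (simp add: F_def sgn_pq_def mult_2)
  qed
  have s3: "(\<Sum>i<r. F (p+p+r+i)) = (\<Sum>i<r. (\<i> * ?d k (p+i) + - \<i> * M k (p+i)) * (\<i> * ?d k' (p+i) + - \<i> * M k' (p+i)))"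
  proof (intro sum.cong refl)
    fix i assume "i \<in> {..<r}"
    then show "F (p+p+r+i) = (\<i> * ?d k (p+i) + - \<i> * M k (p+i)) * (\<i> * ?d k' (p+i) + - \<i> * M k' (p+i))"
      using L3[of i r k p M jj] L3[of i r k' p M jj] k k' by (simp add: F_def sgn_pq_def mult_2)
  qed
  have s01: "(\<Sum>a<p. F a) + (\<Sum>i<p. F (p+i)) = - 2 * (\<Sum>i<p. ?d k i * M k' i) - 2 * (\<Sum>i<p. ?d k' i * M k i)"
    unfolding s0 s1 sum.distrib[symmetric] sum_distrib_left sum_subtractf[symmetric]
    by (intro sum.cong) (auto simp: algebra_simps)
  have s23: "(\<Sum>i<r. F (p+p+i)) + (\<Sum>i<r. F (p+p+r+i)) = 2 * (\<Sum>i<r. ?d k (p+i) * M k' (p+i)) + 2 * (\<Sum>i<r. ?d k' (p+i) * M k (p+i))"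
    unfolding s2 s3 sum.distrib[symmetric] sum_distrib_left
    by (intro sum.cong) (auto simp: algebra_simps)
  have tot: "(\<Sum>a<p+p+r+r. F a) = - 2 * (if k < p then M k' k else 0) - 2 * (if k' < p then M k k' else 0)
      + 2 * (if p \<le> k \<and> k < p+r then M k' k else 0) + 2 * (if p \<le> k' \<and> k' < p+r then M k k' else 0)"
    unfolding sum_split_add add.assoc[symmetric] s01
    using s23 dsum0[where p=p and k=k and g="\<lambda>i. M k' i"] dsum0[where p=p and k=k' and g="\<lambda>i. M k i"]
      dsum1[where r=r and k=k and p=p and g="\<lambda>i. M k' i"] dsum1[where r=r and k=k' and p=p and g="\<lambda>i. M k i"]
    by (simp add: algebra_simps)
  have c: "M k k' * of_real (sgn_pq p k) + of_real (sgn_pq p k') * M k' k = 0"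
    using so k k' unfolding in_so_C_def by blast
  have "(\<Sum>a<p+p+r+r. F a) = 0"
    unfolding tot using c k k' by (cases "k < p"; cases "k' < p") (auto simp: sgn_pq_def algebra_simps,
      metis minus_equation_iff, metis distrib_right mult_zero_left)
  then show ?thesis by (simp add: F_def)
qed


lemma conf_full:
  assumes k: "k < p + r" and k': "k' < p + r" and so: "in_so_C p r M" and j: "j < p"
  shows "conformality p (p+(p+2*r)) p (\<lambda>X. Phi_hat p r M X k j) (\<lambda>X. Phi_hat p r M X k' j') X = 0"
proof -
  have inner: "(\<Sum>c<p. of_real (sgn_pq p a) * Phi_hat p r M (Emat a c) k j * Phi_hat p r M (Emat a c) k' j')
     = (if j = j' then of_real (sgn_pq p a) * Phi_hat p r M (Emat a j) k j * Phi_hat p r M (Emat a j) k' j else 0)" for a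
  proof -
    have "(\<Sum>c<p. of_real (sgn_pq p a) * Phi_hat p r M (Emat a c) k j * Phi_hat p r M (Emat a c) k' j')
       = (\<Sum>c<p. if c = j then of_real (sgn_pq p a) * Phi_hat p r M (Emat a j) k j * Phi_hat p r M (Emat a j) k' j' else 0)"
      by (intro sum.cong) (auto simp: Phi_E_col)
    also have "\<dots> = of_real (sgn_pq p a) * Phi_hat p r M (Emat a j) k j * Phi_hat p r M (Emat a j) k' j'"
      using j by simp
    finally show ?thesis by (auto simp: Phi_E_col)
  qed
  have e: "p + (p + 2*r) = p+p+r+r" by simp
  show ?thesis
    unfolding conformality_def partial_Phi inner e
    using conf_core[OF k k' so, of j] by (cases "j = j'") auto
qed

theorem proposition5p1:
  fixes p r s :: nat and M :: cmat
  assumes "0 < p" and "0 < r" and "s = p + 2*r"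
    and "in_so_C p r M"
  shows "orthogonal_harmonic_family p (p+s) p
           {(\<lambda>X. Phi_hat p r M X k j) | k j. k < p + r \<and> j < p}"
  unfolding orthogonal_harmonic_family_def
proof (intro conjI ballI allI)
  fix f X assume "f \<in> {(\<lambda>X. Phi_hat p r M X k j) | k j. k < p + r \<and> j < p}"
  then obtain k j where f: "f = (\<lambda>X. Phi_hat p r M X k j)" by blast
  show "tension p (p+s) p f X = 0"
    unfolding tension_def f partial_Phi_fun partial_const by simp
next
  fix f g X
  assume "f \<in> {(\<lambda>X. Phi_hat p r M X k j) | k j. k < p + r \<and> j < p}"
     and "g \<in> {(\<lambda>X. Phi_hat p r M X k j) | k j. k < p + r \<and> j < p}"
  then obtain k j k' j' where f: "f = (\<lambda>X. Phi_hat p r M X k j)" and g: "g = (\<lambda>X. Phi_hat p r M X k' j')"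
    and "k < p + r" "j < p" "k' < p + r" by blast
  then show "conformality p (p+s) p f g X = 0"
    using conf_full[of k p r k' M j j' X] assms by simp
qed

end
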